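(* Let $R$ be a QNA with Goodearl–Yakimov elements $y_1,\ldots,y_N$, let $j\in[1,N]$, $r\in R_j$ and $w\in R$ with $rw\in y_jR$. If $r\notin y_jR_j$, then $w\in y_jR$.
   Context: ${\mathbb K}$ is a field of characteristic $0$. A quantum nilpotent algebra (QNA) is an iterated Ore extension $R={\mathbb K}[x_1][x_2;\sigma_2,\delta_2]\cdots[x_N;\sigma_N,\delta_N]$, where $R_k={\mathbb K}[x_1][x_2;\sigma_2,\delta_2]\cdots[x_k;\sigma_k,\delta_k]$ ($R_0={\mathbb K}$), $\sigma_k$ is a ${\mathbb K}$-automorphism and $\delta_k$ a $\sigma_k$-derivation of $R_{k-1}$, together with a torus $\mathcal H$ acting rationally by ${\mathbb K}$-automorphisms on $R$ with each $x_i$ an $\mathcal H$-eigenvector, such that: (i) $\sigma_k(x_j)=\lambda_{kj}x_j$ for $j<k$, with $\lambda_{kj}\in{\mathbb K}^*$; (ii) $\delta_k$ is locally nilpotent on $R_{k-1}$; (iii) for each $k$ there exist $h_k\in\mathcal H$ and $q_k\in{\mathbb K}^*$ not a root of unity such that $h_k$ acts on $R_{k-1}$ as $\sigma_k$ and $h_k\cdot x_k=q_kx_k$. The rank is $n=|\{k:\delta_k=0\}|$ and $\mathcal H=({\mathbb K}^* )^n$ is taken maximal. Homogeneous elements are the $\mathcal H$-eigenvectors. An element $u$ is normal if $uR=Ru$; a prime element is a nonzero normal $p$ with $pR$ a completely prime ideal. Goodearl–Yakimov elements: there is a surjective map $\mu:[1,N]\to[1,n]$ with predecessor $p(k)=\max\{j<k:\mu(j)=\mu(k)\}$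 (or $-\infty$ if none) and successor $s(k)=\min\{j>k:\mu(j)=\mu(k)\}$ (or $+\infty$ if none), and homogeneous elements $y_1,\ldots,y_N\in R$, uniquely determined, with $y_k=x_k$ if $p(k)=-\infty$ and $y_k=y_{p(k)}x_k-c_k$ for some $c_k\in R_{k-1}$ otherwise, such that for every $k$ the set $\{y_j: j\le k,\ s(j)>k\}$ is, up to nonzero scalars, the set of homogeneous prime elements of $R_k$. Note $y_j\in R_j$. The $y_i$ pairwise quasi-commute. *)

theory Defs
  imports Main
begin

(* The ground field K is a type 'k :: field_char_0, embedded into the centre of
   the algebra R (the whole type 'a :: ring_1) via the structure map sc. *)

definition K_alg :: "('k::field_char_0 \<Rightarrow> 'a::ring_1) \<Rightarrow> bool" where
  "K_alg sc \<longleftrightarrow> inj sc \<and> sc 0 = 0 \<and> sc 1 = 1 \<and>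
     (\<forall>a b. sc (a + b) = sc a + sc b) \<and> (\<forall>a b. sc (a * b) = sc a * sc b) \<and>
     (\<forall>c r. sc c * r = r * sc c)"

definition mono :: "(nat \<Rightarrow> 'a::ring_1) \<Rightarrow> nat \<Rightarrow> (nat \<Rightarrow> nat) \<Rightarrow> 'a" where
  "mono x k a = prod_list (map (\<lambda>i. x i ^ a i) [1..<Suc k])"

definition Rk :: "('k::field_char_0 \<Rightarrow> 'a::ring_1) \<Rightarrow> (nat \<Rightarrow> 'a) \<Rightarrow> nat \<Rightarrow> 'a set" where
  "Rk sc x k = {r. \<exists>A c. finite A \<and> r = (\<Sum>a\<in>A. sc (c a) * mono x k a)}"

(* the torus H = K-star to the n, elements represented as functions nat => K,
   nonzero on [1,n] and equal to 1 elsewhere *)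
definition torus :: "nat \<Rightarrow> (nat \<Rightarrow> 'k::field_char_0) set" where
  "torus n = {h. (\<forall>i\<in>{1..n}. h i \<noteq> 0) \<and> (\<forall>i. i \<notin> {1..n} \<longrightarrow> h i = 1)}"

definition K_alg_auto_on ::
  "('k::field_char_0 \<Rightarrow> 'a::ring_1) \<Rightarrow> 'a set \<Rightarrow> ('a \<Rightarrow> 'a) \<Rightarrow> bool" where
  "K_alg_auto_on sc S f \<longleftrightarrow> bij_betw f S S \<and>
     (\<forall>a\<in>S. \<forall>b\<in>S. f (a + b) = f a + f b \<and> f (a * b) = f a * f b) \<and>
     (\<forall>c. f (sc c) = sc c)"

definition torus_action ::
  "('k::field_char_0 \<Rightarrow> 'a::ring_1) \<Rightarrow> (nat \<Rightarrow> 'a) \<Rightarrow> nat \<Rightarrow> nat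
     \<Rightarrow> ((nat \<Rightarrow> 'k) \<Rightarrow> 'a \<Rightarrow> 'a) \<Rightarrow> bool" where
  "torus_action sc x N n act \<longleftrightarrow>
     (\<forall>h\<in>torus n. K_alg_auto_on sc UNIV (act h)) \<and>
     act (\<lambda>_. 1) = id \<and>
     (\<forall>h\<in>torus n. \<forall>h'\<in>torus n. act (\<lambda>i. h i * h' i) = act h \<circ> act h') \<and>
     (\<forall>i\<in>{1..N}. \<exists>m :: nat \<Rightarrow> int. \<forall>h\<in>torus n.
        act h (x i) = sc (\<Prod>l\<in>{1..n}. power_int (h l) (m l)) * x i)"

definition homogeneous ::
  "('k::field_char_0 \<Rightarrow> 'a::ring_1) \<Rightarrow> nat \<Rightarrow> ((nat \<Rightarrow> 'k) \<Rightarrow> 'a \<Rightarrow> 'a) \<Rightarrow> 'a \<Rightarrow> bool" where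
  "homogeneous sc n act u \<longleftrightarrow> u \<noteq> 0 \<and> (\<forall>h\<in>torus n. \<exists>c. act h u = sc c * u)"

definition prime_elem_in :: "'a::ring_1 set \<Rightarrow> 'a \<Rightarrow> bool" where
  "prime_elem_in S u \<longleftrightarrow> u \<in> S \<and> u \<noteq> 0 \<and>
     (\<lambda>t. u * t) ` S = (\<lambda>t. t * u) ` S \<and>
     (\<lambda>t. u * t) ` S \<noteq> S \<and>
     (\<forall>a\<in>S. \<forall>b\<in>S. a * b \<in> (\<lambda>t. u * t) ` S \<longrightarrow>
        a \<in> (\<lambda>t. u * t) ` S \<or> b \<in> (\<lambda>t. u * t) ` S)"

definition ore_rank :: "('k::field_char_0 \<Rightarrow> 'a::ring_1) \<Rightarrow> (nat \<Rightarrow> 'a) \<Rightarrow> nat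
     \<Rightarrow> (nat \<Rightarrow> 'a \<Rightarrow> 'a) \<Rightarrow> nat" where
  "ore_rank sc x N \<delta> = card {k\<in>{1..N}. \<forall>r\<in>Rk sc x (k - 1). \<delta> k r = 0}"

(* Quantum nilpotent algebra: R (= UNIV :: 'a set) is the iterated Ore extension
   K[x_1][x_2;s_2,d_2]...[x_N;s_N,d_N], presented internally: the ordered monomials
   in x_1..x_N form a K-basis of R, and x_k r = s_k(r) x_k + d_k(r) for r in R_{k-1},
   with s_k a K-algebra automorphism and d_k a K-linear s_k-derivation of R_{k-1};
   together with conditions (i)-(iii) for the torus action act of H = K-star to the n,
   n the rank. *)
definition QNA :: "('k::field_char_0 \<Rightarrow> 'a::ring_1) \<Rightarrow> (nat \<Rightarrow> 'a) \<Rightarrow> nat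
     \<Rightarrow> (nat \<Rightarrow> 'a \<Rightarrow> 'a) \<Rightarrow> (nat \<Rightarrow> 'a \<Rightarrow> 'a) \<Rightarrow> ((nat \<Rightarrow> 'k) \<Rightarrow> 'a \<Rightarrow> 'a) \<Rightarrow> bool" where
  "QNA sc x N \<sigma> \<delta> act \<longleftrightarrow>
     K_alg sc \<and>
     (\<forall>r. r \<in> Rk sc x N) \<and>
     (\<forall>A c. finite A \<longrightarrow> (\<forall>a\<in>A. \<forall>i. i \<notin> {1..N} \<longrightarrow> a i = 0) \<longrightarrow>
        (\<Sum>a\<in>A. sc (c a) * mono x N a) = 0 \<longrightarrow> (\<forall>a\<in>A. c a = 0)) \<and>
     (\<forall>k\<in>{1..N}.
        K_alg_auto_on sc (Rk sc x (k - 1)) (\<sigma> k) \<and>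
        (\<forall>r\<in>Rk sc x (k - 1). \<delta> k r \<in> Rk sc x (k - 1)) \<and>
        (\<forall>a\<in>Rk sc x (k - 1). \<forall>b\<in>Rk sc x (k - 1).
            \<delta> k (a + b) = \<delta> k a + \<delta> k b \<and>
            \<delta> k (a * b) = \<sigma> k a * \<delta> k b + \<delta> k a * b) \<and>
        (\<forall>c. \<forall>a\<in>Rk sc x (k - 1). \<delta> k (sc c * a) = sc c * \<delta> k a) \<and>
        (\<forall>r\<in>Rk sc x (k - 1). x k * r = \<sigma> k r * x k + \<delta> k r) \<and>
        (\<forall>j\<in>{1..<k}. \<exists>lam. lam \<noteq> 0 \<and> \<sigma> k (x j) = sc lam * x j) \<and>
        (\<forall>r\<in>Rk sc x (k - 1). \<exists>m. (\<delta> k ^^ m) r = 0) \<and>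
        (\<exists>h\<in>torus (ore_rank sc x N \<delta>). \<exists>q.
            (\<forall>r\<in>Rk sc x (k - 1). act h r = \<sigma> k r) \<and> act h (x k) = sc q * x k \<and>
            (\<forall>m::nat. m > 0 \<longrightarrow> q ^ m \<noteq> 1))) \<and>
     torus_action sc x N (ore_rank sc x N \<delta>) act"

(* predecessor p(k) (None = -infinity) and successor s(k) (None = +infinity) *)
definition pred_mu :: "(nat \<Rightarrow> nat) \<Rightarrow> nat \<Rightarrow> nat option" where
  "pred_mu \<mu> k = (if {j. 1 \<le> j \<and> j < k \<and> \<mu> j = \<mu> k} = {} then None
                  else Some (Max {j. 1 \<le> j \<and> j < k \<and> \<mu> j = \<mu> k}))"

definition succ_mu :: "(nat \<Rightarrow> nat) \<Rightarrow> nat \<Rightarrow> nat \<Rightarrow> nat option" where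
  "succ_mu \<mu> N k = (if {j. k < j \<and> j \<le> N \<and> \<mu> j = \<mu> k} = {} then None
                  else Some (Min {j. k < j \<and> j \<le> N \<and> \<mu> j = \<mu> k}))"

definition succ_gt :: "(nat \<Rightarrow> nat) \<Rightarrow> nat \<Rightarrow> nat \<Rightarrow> nat \<Rightarrow> bool" where
  "succ_gt \<mu> N j k \<longleftrightarrow> (case succ_mu \<mu> N j of None \<Rightarrow> True | Some s \<Rightarrow> k < s)"

definition GY_elements :: "('k::field_char_0 \<Rightarrow> 'a::ring_1) \<Rightarrow> (nat \<Rightarrow> 'a) \<Rightarrow> nat
     \<Rightarrow> nat \<Rightarrow> ((nat \<Rightarrow> 'k) \<Rightarrow> 'a \<Rightarrow> 'a) \<Rightarrow> (nat \<Rightarrow> nat) \<Rightarrow> (nat \<Rightarrow> 'a) \<Rightarrow> bool" where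
  "GY_elements sc x N n act \<mu> y \<longleftrightarrow>
     \<mu> ` {1..N} = {1..n} \<and>
     (\<forall>k\<in>{1..N}.
        homogeneous sc n act (y k) \<and>
        (pred_mu \<mu> k = None \<longrightarrow> y k = x k) \<and>
        (\<forall>p. pred_mu \<mu> k = Some p \<longrightarrow> (\<exists>c\<in>Rk sc x (k - 1). y k = y p * x k - c))) \<and>
     (\<forall>k\<in>{1..N}. \<forall>u\<in>Rk sc x k.
        (homogeneous sc n act u \<and> prime_elem_in (Rk sc x k) u) \<longleftrightarrow>
        (\<exists>j c. 1 \<le> j \<and> j \<le> k \<and> succ_gt \<mu> N j k \<and> c \<noteq> 0 \<and> u = sc c * y j))"

end

theory Submission
  imports Defs
begin

lemma Kal: assumes "K_alg sc"
  shows "sc 0 = 0" "sc 1 = 1" "\<And>a b. sc (a+b) = sc a + sc b" "\<And>a b. sc (a*b) = sc a * sc b"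
  using assms unfolding K_alg_def by blast+

lemma sc_neg: assumes "K_alg sc" shows "sc (-c) = - sc c"
proof -
  have "sc (-c + c) = sc (-c) + sc c" by (rule Kal(3)[OF assms])
  hence "sc (-c) + sc c = 0" using Kal(1)[OF assms] by simp
  thus ?thesis by (simp add: eq_neg_iff_add_eq_0)
qed

lemma Rk_induct[consumes 1]:
  assumes "v \<in> Rk sc x k" "P 0" "\<And>u v. P u \<Longrightarrow> P v \<Longrightarrow> P (u+v)"
    "\<And>c a. P (sc c * mono x k a)"
  shows "P v"
proof -
  obtain A c where A: "finite A" "v = (\<Sum>a\<in>A. sc (c a) * mono x k a)"
    using assms(1) unfolding Rk_def by auto
  have "P (\<Sum>a\<in>B. sc (c a) * mono x k a)" if "finite B" for B
    using that by (induct rule: finite_induct) (auto intro: assms)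
  thus ?thesis using A by simp
qed

lemma Rk_zero: "0 \<in> Rk sc x k"
  unfolding Rk_def by (rule CollectI, rule exI[of _ "{}"]) auto

lemma Rk_add: assumes K: "K_alg sc" and u: "u \<in> Rk sc x k" and v: "v \<in> Rk sc x k"
  shows "u + v \<in> Rk sc x k"
proof -
  obtain A c where A: "finite A" "u = (\<Sum>a\<in>A. sc (c a) * mono x k a)"
    using u unfolding Rk_def by auto
  obtain B d where B: "finite B" "v = (\<Sum>a\<in>B. sc (d a) * mono x k a)"
    using v unfolding Rk_def by auto
  define e where "e a = (if a\<in>A then c a else 0) + (if a\<in>B then d a else 0)" for a
  have fC: "finite (A \<union> B)" using A B by simp
  have eq: "sc (e a) * mono x k a = (if a\<in>A then sc (c a) * mono x k a else 0)
       + (if a\<in>B then sc (d a) * mono x k a else 0)" for a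
    by (cases "a\<in>A"; cases "a\<in>B") (simp_all add: e_def Kal[OF K] distrib_right)
  have "(\<Sum>a\<in>A \<union> B. sc (e a) * mono x k a) = 
     (\<Sum>a\<in>A \<union> B. (if a\<in>A then sc (c a) * mono x k a else 0)) +
     (\<Sum>a\<in>A \<union> B. (if a\<in>B then sc (d a) * mono x k a else 0))"
    unfolding eq by (simp add: sum.distrib)
  also have "\<dots> = u + v"
  proof -
    have 1: "(A \<union> B) \<inter> A = A" "(A \<union> B) \<inter> B = B" by blast+
    have 2: "(\<Sum>a\<in>A \<union> B. (if a\<in>A then sc (c a) * mono x k a else 0)) = u"
      unfolding A(2) sum.inter_restrict[OF fC, symmetric] 1 ..
    have 3: "(\<Sum>a\<in>A \<union> B. (if a\<in>B then sc (d a) * mono x k a else 0)) = v"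
      unfolding B(2) sum.inter_restrict[OF fC, symmetric] 1 ..
    show ?thesis unfolding 2 3 ..
  qed
  finally have "u + v = (\<Sum>a\<in>A \<union> B. sc (e a) * mono x k a)" by simp
  thus ?thesis unfolding Rk_def using fC by (intro CollectI exI conjI)
qed

lemma Rk_scale: assumes K: "K_alg sc" and v: "v \<in> Rk sc x k"
  shows "sc c * v \<in> Rk sc x k"
proof -
  obtain A d where A: "finite A" "v = (\<Sum>a\<in>A. sc (d a) * mono x k a)"
    using v unfolding Rk_def by auto
  have "sc c * v = (\<Sum>a\<in>A. sc (c * d a) * mono x k a)"
    using A Kal[OF K] by (simp add: sum_distrib_left mult.assoc)
  thus ?thesis unfolding Rk_def using A(1) by (intro CollectI exI conjI)
qed

lemma Rk_neg: assumes K: "K_alg sc" and v: "v \<in> Rk sc x k" shows "- v \<in> Rk sc x k"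
proof -
  have "- v = sc (-1) * v" using sc_neg[OF K] Kal[OF K] by simp
  thus ?thesis using Rk_scale[OF K v] by simp
qed

lemma Rk_diff: assumes K: "K_alg sc" and u: "u \<in> Rk sc x k" and v: "v \<in> Rk sc x k"
  shows "u - v \<in> Rk sc x k"
  using Rk_add[OF K u Rk_neg[OF K v]] by simp

lemma Rk_sum: assumes K: "K_alg sc" shows "finite I \<Longrightarrow> (\<And>i. i\<in>I \<Longrightarrow> f i \<in> Rk sc x k) \<Longrightarrow> sum f I \<in> Rk sc x k"
  by (induct rule: finite_induct) (auto intro: Rk_zero Rk_add[OF K])

lemma Rk_mono_in: assumes K: "K_alg sc" shows "mono x k a \<in> Rk sc x k"
proof -
  show ?thesis unfolding Rk_def
    by (rule CollectI, rule exI[of _ "{a}"], rule exI[of _ "\<lambda>_. 1"]) (simp add: Kal[OF K])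
qed

lemma mono_Suc: "mono x (Suc k) a = mono x k a * x (Suc k) ^ a (Suc k)"
  unfolding mono_def by simp

lemma mono_cong: "(\<And>i. i \<in> {1..k} \<Longrightarrow> a i = b i) \<Longrightarrow> mono x k a = mono x k b"
  unfolding mono_def by (intro arg_cong[where f=prod_list] map_cong) auto

lemma Rk_times_xpow: assumes K: "K_alg sc" and b: "b \<in> Rk sc x k"
  shows "b * x (Suc k) ^ n \<in> Rk sc x (Suc k)"
  using b
proof (induct rule: Rk_induct)
  case 1 then show ?case by (simp add: Rk_zero)
next
  case (2 u v) then show ?case by (simp add: distrib_right Rk_add[OF K])
next
  case (3 c a)
  have "mono x k a * x (Suc k) ^ n = mono x (Suc k) (a(Suc k := n))"
  proof -
    have "mono x k a = mono x k (a(Suc k := n))" by (rule mono_cong) auto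
    thus ?thesis by (simp add: mono_Suc)
  qed
  then show ?case using Rk_scale[OF K Rk_mono_in[OF K]] by (simp add: mult.assoc)
qed

lemma Rk_Suc_induct[consumes 1]:
  assumes "v \<in> Rk sc x (Suc k)" "P 0" "\<And>u v. P u \<Longrightarrow> P v \<Longrightarrow> P (u+v)"
    "\<And>b n. b \<in> Rk sc x k \<Longrightarrow> P (b * x (Suc k) ^ n)"
  and K: "K_alg sc"
  shows "P v"
  using assms(1)
proof (induct rule: Rk_induct)
  case 1 then show ?case by fact
next
  case (2 u v) then show ?case using assms(3) by blast
next
  case (3 c a)
  have "sc c * mono x (Suc k) a = (sc c * mono x k a) * x (Suc k) ^ a (Suc k)"
    by (simp add: mono_Suc mult.assoc)
  then show ?case using assms(4)[OF Rk_scale[OF K Rk_mono_in[OF K]]] by simp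
qed

lemma Rk_Suc_mono: assumes K: "K_alg sc" and "b \<in> Rk sc x k" shows "b \<in> Rk sc x (Suc k)"
  using Rk_times_xpow[OF K assms(2), of 0] by simp

lemma Rk_le_mono: assumes K: "K_alg sc" and "i \<le> k" "b \<in> Rk sc x i" shows "b \<in> Rk sc x k"
  using assms(2,3) by (induct k) (auto simp: le_Suc_eq intro: Rk_Suc_mono[OF K])

lemma x_times_Rk:
  assumes K: "K_alg sc"
    and sig: "\<forall>r\<in>Rk sc x m. s r \<in> Rk sc x m"
    and del: "\<forall>r\<in>Rk sc x m. d r \<in> Rk sc x m"
    and com: "\<forall>r\<in>Rk sc x m. x (Suc m) * r = s r * x (Suc m) + d r"
    and v: "v \<in> Rk sc x (Suc m)"
  shows "x (Suc m) * v \<in> Rk sc x (Suc m)"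
  using v
proof (induct rule: Rk_Suc_induct)
  case 1 then show ?case by (simp add: Rk_zero)
next
  case (2 u v) then show ?case by (simp add: distrib_left Rk_add[OF K])
next
  case (3 b n)
  have e: "x (Suc m) * (b * x (Suc m) ^ n) = s b * x (Suc m) ^ Suc n + d b * x (Suc m) ^ n"
    using com 3 by (simp add: mult.assoc[symmetric] distrib_right)
  show ?case unfolding e
    by (rule Rk_add[OF K Rk_times_xpow[OF K] Rk_times_xpow[OF K]]) (use sig del 3 in auto)
qed (rule K)

lemma xpow_times_Rk:
  assumes K: "K_alg sc"
    and sig: "\<forall>r\<in>Rk sc x m. s r \<in> Rk sc x m"
    and del: "\<forall>r\<in>Rk sc x m. d r \<in> Rk sc x m"
    and com: "\<forall>r\<in>Rk sc x m. x (Suc m) * r = s r * x (Suc m) + d r"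
    and v: "v \<in> Rk sc x (Suc m)"
  shows "x (Suc m) ^ n * v \<in> Rk sc x (Suc m)"
proof (induct n)
  case 0 then show ?case using v by simp
next
  case (Suc n)
  have "x (Suc m) ^ Suc n * v = x (Suc m) * (x (Suc m) ^ n * v)" by (simp add: mult.assoc)
  then show ?case using x_times_Rk[OF K sig del com Suc] by simp
qed

lemma Rk_mult_closed:
  assumes K: "K_alg sc"
    and H: "\<And>m. Suc m \<le> N \<Longrightarrow> (\<forall>r\<in>Rk sc x m. \<sigma> (Suc m) r \<in> Rk sc x m) \<and>
           (\<forall>r\<in>Rk sc x m. \<delta> (Suc m) r \<in> Rk sc x m) \<and>
           (\<forall>r\<in>Rk sc x m. x (Suc m) * r = \<sigma> (Suc m) r * x (Suc m) + \<delta> (Suc m) r)"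
  shows "k \<le> N \<Longrightarrow> u \<in> Rk sc x k \<Longrightarrow> v \<in> Rk sc x k \<Longrightarrow> u * v \<in> Rk sc x k"
proof (induct k arbitrary: u v)
  case 0
  from 0(2) show ?case
  proof (induct rule: Rk_induct)
    case 1 then show ?case by (simp add: Rk_zero)
  next
    case (2 u1 u2) then show ?case by (simp add: distrib_right Rk_add[OF K])
  next
    case (3 c a)
    have "mono x 0 a = 1" unfolding mono_def by simp
    then show ?case using Rk_scale[OF K 0(3)] by simp
  qed
next
  case (Suc m)
  have hm: "m \<le> N" using Suc by simp
  note HH = H[OF Suc(2)]
  have bw: "b * w \<in> Rk sc x (Suc m)" if b: "b \<in> Rk sc x m" and w: "w \<in> Rk sc x (Suc m)" for b w
    using w
  proof (induct rule: Rk_Suc_induct)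
    case 1 then show ?case by (simp add: Rk_zero)
  next
    case (2 u1 u2) then show ?case by (simp add: distrib_left Rk_add[OF K])
  next
    case (3 b' n)
    have "b * (b' * x (Suc m) ^ n) = (b * b') * x (Suc m) ^ n" by (simp add: mult.assoc)
    then show ?case using Rk_times_xpow[OF K Suc(1)[OF hm b 3]] by simp
  qed (rule K)
  from Suc(3) show ?case
  proof (induct rule: Rk_Suc_induct)
    case 1 then show ?case by (simp add: Rk_zero)
  next
    case (2 u1 u2) then show ?case by (simp add: distrib_right Rk_add[OF K])
  next
    case (3 b n)
    have "b * x (Suc m) ^ n * v = b * (x (Suc m) ^ n * v)" by (simp add: mult.assoc)
    then show ?case using bw[OF 3 xpow_times_Rk[OF K HH[THEN conjunct1] HH[THEN conjunct2, THEN conjunct1]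
       HH[THEN conjunct2, THEN conjunct2] Suc(4)]] by simp
  qed (rule K)
qed

definition Tm :: "(nat \<Rightarrow> 'a::ring_1) \<Rightarrow> nat \<Rightarrow> nat \<Rightarrow> (nat \<Rightarrow> nat) \<Rightarrow> 'a" where
  "Tm x j N t = prod_list (map (\<lambda>i. x i ^ t i) [Suc j..<Suc N])"
definition tlx :: "nat \<Rightarrow> nat \<Rightarrow> (nat \<Rightarrow> nat) \<Rightarrow> (nat \<Rightarrow> nat)" where
  "tlx j N a = (\<lambda>i. if j < i \<and> i \<le> N then a i else 0)"
definition hdx :: "nat \<Rightarrow> (nat \<Rightarrow> nat) \<Rightarrow> (nat \<Rightarrow> nat)" where
  "hdx j a = (\<lambda>i. if 1 \<le> i \<and> i \<le> j then a i else 0)"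

lemma tlx_eq: "tlx j N a = a \<longleftrightarrow> (\<forall>i. \<not> (j < i \<and> i \<le> N) \<longrightarrow> a i = 0)"
  unfolding tlx_def fun_eq_iff by auto
lemma hdx_eq: "hdx j a = a \<longleftrightarrow> (\<forall>i. \<not> (1 \<le> i \<and> i \<le> j) \<longrightarrow> a i = 0)"
  unfolding hdx_def fun_eq_iff by auto

lemma mono_split: assumes "j \<le> N" shows "mono x N a = mono x j a * Tm x j N (tlx j N a)"
proof -
  have u: "[1..<Suc N] = [1..<Suc j] @ [Suc j..<Suc N]"
    using upt_add_eq_append[of 1 "Suc j" "N - j"] assms by simp
  have m: "map (\<lambda>i. x i ^ a i) [Suc j..<Suc N] = map (\<lambda>i. x i ^ tlx j N a i) [Suc j..<Suc N]"
    by (rule map_cong) (auto simp: tlx_def)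
  show ?thesis unfolding mono_def Tm_def u m[symmetric] by simp
qed

lemma sc_sum: assumes K: "K_alg sc" shows "sc (sum f I) = (\<Sum>i\<in>I. sc (f i))"
proof (cases "finite I")
  case True then show ?thesis by (induct rule: finite_induct) (simp_all add: Kal[OF K])
next
  case False then show ?thesis by (simp add: Kal[OF K])
qed

lemma decomp:
  assumes K: "K_alg sc" and jN: "j \<le> N" and w: "w \<in> Rk sc x N"
  shows "\<exists>S b. finite S \<and> (\<forall>t\<in>S. tlx j N t = t) \<and> (\<forall>t. b t \<in> Rk sc x j) \<and>
     (\<forall>t. t \<notin> S \<longrightarrow> b t = 0) \<and> w = (\<Sum>t\<in>S. b t * Tm x j N t)"
proof -
  obtain A c where A: "finite A" "w = (\<Sum>a\<in>A. sc (c a) * mono x N a)"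
    using w unfolding Rk_def by auto
  define S where "S = tlx j N ` A"
  define b where "b t = (\<Sum>a\<in>{a. a \<in> A \<and> tlx j N a = t}. sc (c a) * mono x j a)" for t
  have fS: "finite S" using A unfolding S_def by simp
  have "\<forall>t\<in>S. tlx j N t = t" unfolding S_def by (auto simp: tlx_def fun_eq_iff)
  moreover have "\<forall>t. b t \<in> Rk sc x j" unfolding b_def
    by (intro allI Rk_sum[OF K] Rk_scale[OF K] Rk_mono_in[OF K]) (use A in auto)
  moreover have "\<forall>t. t \<notin> S \<longrightarrow> b t = 0"
  proof (intro allI impI)
    fix t assume "t \<notin> S"
    hence e: "{a. a \<in> A \<and> tlx j N a = t} = {}" unfolding S_def by auto
    show "b t = 0" unfolding b_def e by simp
  qed
  moreover have "w = (\<Sum>t\<in>S. b t * Tm x j N t)"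
  proof -
    have "w = (\<Sum>a\<in>A. sc (c a) * mono x j a * Tm x j N (tlx j N a))"
      unfolding A(2) by (rule sum.cong) (simp_all add: mono_split[OF jN] mult.assoc)
    also have "\<dots> = (\<Sum>t\<in>S. \<Sum>a\<in>{a. a \<in> A \<and> tlx j N a = t}. sc (c a) * mono x j a * Tm x j N (tlx j N a))"
      by (rule sum.group[symmetric]) (use A fS in \<open>auto simp: S_def\<close>)
    also have "\<dots> = (\<Sum>t\<in>S. b t * Tm x j N t)"
      unfolding b_def sum_distrib_right by (rule sum.cong) (auto intro: sum.cong)
    finally show ?thesis .
  qed
  ultimately show ?thesis using fS by blast
qed

lemma Rk_norm:
  assumes K: "K_alg sc" and v: "v \<in> Rk sc x k"
  shows "\<exists>A c. finite A \<and> (\<forall>a\<in>A. hdx k a = a) \<and> v = (\<Sum>a\<in>A. sc (c a) * mono x k a)"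
proof -
  obtain A c where A: "finite A" "v = (\<Sum>a\<in>A. sc (c a) * mono x k a)"
    using v unfolding Rk_def by auto
  define B where "B = hdx k ` A"
  define c' where "c' b = (\<Sum>a\<in>{a. a \<in> A \<and> hdx k a = b}. c a)" for b
  have fB: "finite B" using A unfolding B_def by simp
  have mh: "mono x k (hdx k a) = mono x k a" for a by (rule mono_cong) (auto simp: hdx_def)
  have "v = (\<Sum>b\<in>B. \<Sum>a\<in>{a. a \<in> A \<and> hdx k a = b}. sc (c a) * mono x k a)"
    unfolding A(2) by (rule sum.group[symmetric]) (use A fB in \<open>auto simp: B_def\<close>)
  also have "\<dots> = (\<Sum>b\<in>B. sc (c' b) * mono x k b)"
    unfolding c'_def sc_sum[OF K] sum_distrib_right
    by (rule sum.cong) (auto intro!: sum.cong simp: mh)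
  finally have "v = (\<Sum>b\<in>B. sc (c' b) * mono x k b)" .
  moreover have "\<forall>b\<in>B. hdx k b = b" unfolding B_def by (auto simp: hdx_def fun_eq_iff)
  ultimately show ?thesis using fB by blast
qed

lemma mono_merge:
  assumes jN: "j \<le> N" and a: "hdx j a = a" and t: "tlx j N t = t"
  shows "mono x j a * Tm x j N t = mono x N (\<lambda>i. a i + t i)"
proof -
  have a0: "\<And>i. \<not> (1 \<le> i \<and> i \<le> j) \<Longrightarrow> a i = 0" using a unfolding hdx_eq by blast
  have t0: "\<And>i. \<not> (j < i \<and> i \<le> N) \<Longrightarrow> t i = 0" using t unfolding tlx_eq by blast
  have 1: "mono x j (\<lambda>i. a i + t i) = mono x j a" by (rule mono_cong) (simp add: t0)
  have 2: "tlx j N (\<lambda>i. a i + t i) = t"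
  proof (rule ext)
    fix i show "tlx j N (\<lambda>i. a i + t i) i = t i"
    proof (cases "j < i \<and> i \<le> N")
      case True then have "a i = 0" using a0 by auto
      thus ?thesis using True by (simp add: tlx_def)
    next
      case False thus ?thesis by (simp only: tlx_def if_not_P[OF False] t0[OF False] if_False)
    qed
  qed
  show ?thesis using mono_split[OF jN, of x "\<lambda>i. a i + t i"] 1 2 by simp
qed

lemma uniq:
  assumes K: "K_alg sc" and jN: "j \<le> N"
    and indep: "\<forall>A c. finite A \<longrightarrow> (\<forall>a\<in>A. \<forall>i. i \<notin> {1..N} \<longrightarrow> a i = 0) \<longrightarrow>
        (\<Sum>a\<in>A. sc (c a) * mono x N a) = 0 \<longrightarrow> (\<forall>a\<in>A. c a = 0)"
    and fS: "finite S" and tS: "\<forall>t\<in>S. tlx j N t = t" and eS: "\<forall>t\<in>S. e t \<in> Rk sc x j"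
    and z: "(\<Sum>t\<in>S. e t * Tm x j N t) = 0"
  shows "\<forall>t\<in>S. e t = 0"
proof -
  have "\<forall>t\<in>S. \<exists>p. finite (fst p) \<and> (\<forall>a\<in>fst p. hdx j a = a) \<and>
      e t = (\<Sum>a\<in>fst p. sc (snd p a) * mono x j a)"
  proof
    fix t assume "t \<in> S"
    from Rk_norm[OF K eS[rule_format, OF this]] obtain A c where
      "finite A" "\<forall>a\<in>A. hdx j a = a" "e t = (\<Sum>a\<in>A. sc (c a) * mono x j a)" by blast
    thus "\<exists>p. finite (fst p) \<and> (\<forall>a\<in>fst p. hdx j a = a) \<and>
      e t = (\<Sum>a\<in>fst p. sc (snd p a) * mono x j a)" by (intro exI[of _ "(A, c)"]) simp
  qed
  then obtain F where F: "\<forall>t\<in>S. finite (fst (F t)) \<and> (\<forall>a\<in>fst (F t). hdx j a = a) \<and>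
      e t = (\<Sum>a\<in>fst (F t). sc (snd (F t) a) * mono x j a)"
    by (rule bchoice[THEN exE]) blast
  define AA where "AA t = fst (F t)" for t
  define cc where "cc t = snd (F t)" for t
  define g where "g p = (\<lambda>i. snd p i + fst p i)" for p :: "(nat \<Rightarrow> nat) \<times> (nat \<Rightarrow> nat)"
  have fA: "\<And>t. t \<in> S \<Longrightarrow> finite (AA t)" and hA: "\<And>t a. t \<in> S \<Longrightarrow> a \<in> AA t \<Longrightarrow> hdx j a = a"
    and eA: "\<And>t. t \<in> S \<Longrightarrow> e t = (\<Sum>a\<in>AA t. sc (cc t a) * mono x j a)"
    using F unfolding AA_def cc_def by auto
  define Sg where "Sg = Sigma S AA"
  have fSg: "finite Sg" unfolding Sg_def using fS fA by auto
  have tg: "tlx j N (g p) = fst p" and hg: "hdx j (g p) = snd p" if pS: "p \<in> Sg" for p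
  proof -
    obtain t a where p: "p = (t, a)" "t \<in> S" "a \<in> AA t" using pS unfolding Sg_def by (cases p) auto
    have a0: "\<And>i. \<not> (1 \<le> i \<and> i \<le> j) \<Longrightarrow> a i = 0" using hA[OF p(2,3)] unfolding hdx_eq by blast
    have t0: "\<And>i. \<not> (j < i \<and> i \<le> N) \<Longrightarrow> t i = 0" using tS p(2) unfolding tlx_eq by blast
    show "tlx j N (g p) = fst p"
    proof (rule ext)
      fix i show "tlx j N (g p) i = fst p i"
      proof (cases "j < i \<and> i \<le> N")
        case True then have "a i = 0" using a0 by auto
        thus ?thesis using True by (simp add: tlx_def g_def p(1))
      next
        case False thus ?thesis by (simp only: tlx_def g_def p(1) if_not_P[OF False] t0[OF False] fst_conv if_False)
      qed
    qed
    show "hdx j (g p) = snd p"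
    proof (rule ext)
      fix i show "hdx j (g p) i = snd p i"
      proof (cases "1 \<le> i \<and> i \<le> j")
        case True then have "t i = 0" using t0 by auto
        thus ?thesis using True by (simp add: hdx_def g_def p(1))
      next
        case False thus ?thesis by (simp only: hdx_def g_def p(1) if_not_P[OF False] a0[OF False] snd_conv if_False)
      qed
    qed
  qed
  have inj: "inj_on g Sg"
  proof (rule inj_onI)
    fix p q assume "p \<in> Sg" "q \<in> Sg" "g p = g q"
    thus "p = q" using tg hg by (metis prod.expand)
  qed
  define C where "C b = cc (tlx j N b) (hdx j b)" for b
  have "0 = (\<Sum>t\<in>S. \<Sum>a\<in>AA t. sc (cc t a) * mono x N (g (t, a)))"
    unfolding z[symmetric]
  proof (rule sum.cong[OF refl])
    fix t assume t: "t \<in> S"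
    show "e t * Tm x j N t = (\<Sum>a\<in>AA t. sc (cc t a) * mono x N (g (t, a)))"
      unfolding eA[OF t] sum_distrib_right g_def
      by (rule sum.cong[OF refl]) (simp add: mult.assoc mono_merge[OF jN hA[OF t] tS[rule_format, OF t]])
  qed
  also have "\<dots> = (\<Sum>p\<in>Sg. sc (cc (fst p) (snd p)) * mono x N (g p))"
    unfolding Sg_def by (subst sum.Sigma) (use fS fA in \<open>auto intro!: sum.cong simp: case_prod_beta\<close>)
  also have "\<dots> = (\<Sum>p\<in>Sg. sc (C (g p)) * mono x N (g p))"
    by (rule sum.cong[OF refl]) (simp add: C_def tg hg)
  also have "\<dots> = (\<Sum>b\<in>g ` Sg. sc (C b) * mono x N b)"
    by (simp add: sum.reindex[OF inj])
  finally have z2: "(\<Sum>b\<in>g ` Sg. sc (C b) * mono x N b) = 0" by simp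
  have sup: "\<forall>b\<in>g ` Sg. \<forall>i. i \<notin> {1..N} \<longrightarrow> b i = 0"
  proof (intro ballI allI impI)
    fix b i assume b: "b \<in> g ` Sg" and i: "i \<notin> {1..N}"
    then obtain p where p: "p \<in> Sg" "b = g p" by auto
    have "hdx j b i = 0" "tlx j N b i = 0" using i jN unfolding hdx_def tlx_def by auto
    hence "snd p i = 0" "fst p i = 0" using tg[OF p(1)] hg[OF p(1)] p(2) by auto
    thus "b i = 0" using p(2) unfolding g_def by simp
  qed
  have C0: "\<forall>b\<in>g ` Sg. C b = 0" using indep[THEN spec[of _ "g ` Sg"], THEN spec[of _ C], THEN mp, OF finite_imageI[OF fSg], THEN mp, OF sup, THEN mp, OF z2] .
  show ?thesis
  proof
    fix t assume t: "t \<in> S"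
    have "\<forall>a\<in>AA t. cc t a = 0"
    proof
      fix a assume a: "a \<in> AA t"
      have p: "(t, a) \<in> Sg" unfolding Sg_def using t a by auto
      have "C (g (t, a)) = 0" using C0 p by blast
      thus "cc t a = 0" using tg[OF p] hg[OF p] unfolding C_def by simp
    qed
    thus "e t = 0" unfolding eA[OF t] by (simp add: Kal[OF K])
  qed
qed

lemma mono_zero: "mono x m (\<lambda>_. 0) = 1"
  by (induct m) (simp_all add: mono_Suc, simp add: mono_def)

lemma QNA_facts:
  assumes Q: "QNA sc x N \<sigma> \<delta> act"
  shows "K_alg sc" "\<forall>r. r \<in> Rk sc x N"
    "\<forall>A c. finite A \<longrightarrow> (\<forall>a\<in>A. \<forall>i. i \<notin> {1..N} \<longrightarrow> a i = 0) \<longrightarrow>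
        (\<Sum>a\<in>A. sc (c a) * mono x N a) = 0 \<longrightarrow> (\<forall>a\<in>A. c a = 0)"
    "\<And>m. Suc m \<le> N \<Longrightarrow> (\<forall>r\<in>Rk sc x m. \<sigma> (Suc m) r \<in> Rk sc x m) \<and>
           (\<forall>r\<in>Rk sc x m. \<delta> (Suc m) r \<in> Rk sc x m) \<and>
           (\<forall>r\<in>Rk sc x m. x (Suc m) * r = \<sigma> (Suc m) r * x (Suc m) + \<delta> (Suc m) r)"
proof -
  note Q' = Q[unfolded QNA_def]
  show "K_alg sc" using Q' by (rule conjunct1)
  show "\<forall>r. r \<in> Rk sc x N" using Q' by (rule conjunct2[THEN conjunct1])
  show "\<forall>A c. finite A \<longrightarrow> (\<forall>a\<in>A. \<forall>i. i \<notin> {1..N} \<longrightarrow> a i = 0) \<longrightarrow>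
        (\<Sum>a\<in>A. sc (c a) * mono x N a) = 0 \<longrightarrow> (\<forall>a\<in>A. c a = 0)"
    using Q' by (rule conjunct2[THEN conjunct2, THEN conjunct1])
  fix m assume m: "Suc m \<le> N"
  hence km: "Suc m \<in> {1..N}" by simp
  note B = Q'[THEN conjunct2, THEN conjunct2, THEN conjunct2, THEN conjunct1, rule_format, OF km]
  note B1 = B[THEN conjunct1, unfolded diff_Suc_1]
  note B2 = B[THEN conjunct2, THEN conjunct1, unfolded diff_Suc_1]
  note B3 = B[THEN conjunct2, THEN conjunct2, THEN conjunct2, THEN conjunct2, THEN conjunct1, unfolded diff_Suc_1]
  have "bij_betw (\<sigma> (Suc m)) (Rk sc x m) (Rk sc x m)"
    using B1 unfolding K_alg_auto_on_def by (rule conjunct1)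
  hence "\<forall>r\<in>Rk sc x m. \<sigma> (Suc m) r \<in> Rk sc x m" by (auto dest: bij_betw_apply)
  thus "(\<forall>r\<in>Rk sc x m. \<sigma> (Suc m) r \<in> Rk sc x m) \<and>
           (\<forall>r\<in>Rk sc x m. \<delta> (Suc m) r \<in> Rk sc x m) \<and>
           (\<forall>r\<in>Rk sc x m. x (Suc m) * r = \<sigma> (Suc m) r * x (Suc m) + \<delta> (Suc m) r)"
    using B2 B3 by (intro conjI)
qed

lemma y_in_Rk:
  assumes K: "K_alg sc" and GY: "GY_elements sc x N n act \<mu> y"
  shows "k \<in> {1..N} \<Longrightarrow> y k \<in> Rk sc x k"
proof (induct k rule: less_induct)
  case (less k)
  have k1: "Suc (k - 1) = k" using less(2) by simp
  have xk: "x k \<in> Rk sc x k"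
    using Rk_times_xpow[OF K Rk_mono_in[OF K, of x "k - 1" "\<lambda>_. 0"], of 1] k1
    by (simp add: mono_zero)
  have G: "pred_mu \<mu> k = None \<longrightarrow> y k = x k"
    "\<forall>p. pred_mu \<mu> k = Some p \<longrightarrow> (\<exists>c\<in>Rk sc x (k - 1). y k = y p * x k - c)"
    using GY less(2) unfolding GY_elements_def by blast+
  show ?case
  proof (cases "pred_mu \<mu> k")
    case None then show ?thesis using G(1) xk by simp
  next
    case (Some p)
    define P where "P = {j. 1 \<le> j \<and> j < k \<and> \<mu> j = \<mu> k}"
    have Pne: "P \<noteq> {}" and pP: "p = Max P" using Some unfolding pred_mu_def P_def
      by (auto split: if_splits)
    have "finite P" unfolding P_def by (rule finite_subset[of _ "{..<k}"]) auto
    hence "p \<in> P" using Pne pP Max_in by blast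
    hence p: "1 \<le> p" "p < k" unfolding P_def by auto
    have yp: "y p \<in> Rk sc x (k - 1)"
      using less(1)[OF p(2)] p less(2) Rk_le_mono[OF K, of p "k - 1"] by auto
    obtain c where c: "c \<in> Rk sc x (k - 1)" "y k = y p * x k - c" using G(2) Some by blast
    have "y p * x k ^ 1 \<in> Rk sc x k" using Rk_times_xpow[OF K yp, of 1] k1 by simp
    moreover have "c \<in> Rk sc x k" using Rk_Suc_mono[OF K c(1)] k1 by simp
    ultimately show ?thesis using c(2) Rk_diff[OF K] by simp
  qed
qed

lemma succ_gt_self: "succ_gt \<mu> N j j"
proof -
  define P where "P = {i. j < i \<and> i \<le> N \<and> \<mu> i = \<mu> j}"
  show ?thesis
  proof (cases "P = {}")
    case True then show ?thesis unfolding succ_gt_def succ_mu_def P_def by simp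
  next
    case False
    have "finite P" unfolding P_def by (rule finite_subset[of _ "{..N}"]) auto
    hence "Min P \<in> P" using False Min_in by blast
    hence "j < Min P" unfolding P_def by auto
    thus ?thesis using False unfolding succ_gt_def succ_mu_def P_def by simp
  qed
qed

theorem lemmaA1:
  fixes sc :: "'k::field_char_0 \<Rightarrow> 'a::ring_1"
    and x :: "nat \<Rightarrow> 'a" and N :: nat
    and \<sigma> \<delta> :: "nat \<Rightarrow> 'a \<Rightarrow> 'a"
    and act :: "(nat \<Rightarrow> 'k) \<Rightarrow> 'a \<Rightarrow> 'a"
    and \<mu> :: "nat \<Rightarrow> nat" and y :: "nat \<Rightarrow> 'a"
    and j :: nat and r w :: 'a
  assumes "QNA sc x N \<sigma> \<delta> act"
    and "GY_elements sc x N (ore_rank sc x N \<delta>) act \<mu> y"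
    and "j \<in> {1..N}"
    and "r \<in> Rk sc x j"
    and "r * w \<in> (\<lambda>t. y j * t) ` UNIV"
    and "r \<notin> (\<lambda>t. y j * t) ` Rk sc x j"
  shows "w \<in> (\<lambda>t. y j * t) ` UNIV"
proof -
  note Q = assms(1) and GY = assms(2) and jr = assms(3) and rR = assms(4)
  have K: "K_alg sc" and RN: "\<forall>r. r \<in> Rk sc x N" using QNA_facts[OF Q] by blast+
  note indep = QNA_facts(3)[OF Q]
  have jN: "j \<le> N" using jr by simp
  have mult: "u * v \<in> Rk sc x j" if "u \<in> Rk sc x j" "v \<in> Rk sc x j" for u v
    using Rk_mult_closed[OF K QNA_facts(4)[OF Q] jN that] .
  have yj: "y j \<in> Rk sc x j" using y_in_Rk[OF K GY jr] .
  have "\<exists>j' c. 1 \<le> j' \<and> j' \<le> j \<and> succ_gt \<mu> N j' j \<and> c \<noteq> 0 \<and> y j = sc c * y j'"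
    using jr succ_gt_self[of \<mu> N j] Kal(2)[OF K] by (intro exI[of _ j] exI[of _ 1]) simp
  hence "homogeneous sc (ore_rank sc x N \<delta>) act (y j) \<and> prime_elem_in (Rk sc x j) (y j)"
    using GY jr yj unfolding GY_elements_def by blast
  hence prime: "\<And>a b. a \<in> Rk sc x j \<Longrightarrow> b \<in> Rk sc x j \<Longrightarrow> a * b \<in> (\<lambda>t. y j * t) ` Rk sc x j \<Longrightarrow>
        a \<in> (\<lambda>t. y j * t) ` Rk sc x j \<or> b \<in> (\<lambda>t. y j * t) ` Rk sc x j"
    unfolding prime_elem_in_def by blast
  obtain v where v: "r * w = y j * v" using assms(5) by blast
  obtain S1 b where S1: "finite S1" "\<forall>t\<in>S1. tlx j N t = t" "\<forall>t. b t \<in> Rk sc x j"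
    "\<forall>t. t \<notin> S1 \<longrightarrow> b t = 0" "w = (\<Sum>t\<in>S1. b t * Tm x j N t)"
    using decomp[OF K jN, of w x] RN by blast
  obtain S2 d where S2: "finite S2" "\<forall>t\<in>S2. tlx j N t = t" "\<forall>t. d t \<in> Rk sc x j"
    "\<forall>t. t \<notin> S2 \<longrightarrow> d t = 0" "v = (\<Sum>t\<in>S2. d t * Tm x j N t)"
    using decomp[OF K jN, of v x] RN by blast
  define S where "S = S1 \<union> S2"
  have fS: "finite S" using S1 S2 unfolding S_def by simp
  have w': "w = (\<Sum>t\<in>S. b t * Tm x j N t)"
    unfolding S1(5) S_def by (rule sum.mono_neutral_left) (use S1 S2 in auto)
  have v': "v = (\<Sum>t\<in>S. d t * Tm x j N t)"
    unfolding S2(5) S_def by (rule sum.mono_neutral_left) (use S1 S2 in auto)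
  define e where "e t = r * b t - y j * d t" for t
  have "(\<Sum>t\<in>S. e t * Tm x j N t) = r * (\<Sum>t\<in>S. b t * Tm x j N t) - y j * (\<Sum>t\<in>S. d t * Tm x j N t)"
    unfolding e_def by (simp add: sum_distrib_left sum_subtractf left_diff_distrib mult.assoc)
  also have "\<dots> = 0" using v w' v' by simp
  finally have z: "(\<Sum>t\<in>S. e t * Tm x j N t) = 0" .
  have tS: "\<forall>t\<in>S. tlx j N t = t" using S1 S2 unfolding S_def by blast
  have eS: "\<forall>t\<in>S. e t \<in> Rk sc x j"
    unfolding e_def using Rk_diff[OF K] mult rR yj S1(3) S2(3) by blast
  have e0: "\<forall>t\<in>S. e t = 0" by (rule uniq[OF K jN indep fS tS eS z])
  have "\<forall>t\<in>S. \<exists>g. b t = y j * g"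
  proof
    fix t assume t: "t \<in> S"
    have "r * b t = y j * d t" using e0 t unfolding e_def by simp
    hence "r * b t \<in> (\<lambda>t. y j * t) ` Rk sc x j" using S2(3) by blast
    hence "b t \<in> (\<lambda>t. y j * t) ` Rk sc x j" using prime[OF rR S1(3)[rule_format]] assms(6) by blast
    thus "\<exists>g. b t = y j * g" by blast
  qed
  then obtain G where G: "\<forall>t\<in>S. b t = y j * G t" by (rule bchoice[THEN exE]) blast
  have "w = (\<Sum>t\<in>S. y j * (G t * Tm x j N t))"
    unfolding w' by (rule sum.cong[OF refl]) (simp add: G mult.assoc)
  also have "\<dots> = y j * (\<Sum>t\<in>S. G t * Tm x j N t)" by (simp add: sum_distrib_left)
  finally show ?thesis by blast
qed

end
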